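(* Let $p \geq m \geq 1$ and $q \geq s \geq 1$ be integers. Then there is a graph homomorphism from ${\sf M}_p(C_{2q+1})$ to ${\sf M}_m(C_{2s+1})$.
   Context: $C_n$ is the cycle on $n$ vertices. A homomorphism from $G$ to $H$ is a map $f:V(G)\to V(H)$ with $f(u)f(v)\in E(H)$ whenever $uv\in E(G)$. For a graph $G$ with vertex set $V_0=\{\langle 0,j\rangle : 0\le j\le n-1\}$ and edge set $E_0$, and $m>0$, the generalized Mycielskian ${\sf M}_m(G)$ has vertex set $V_0\cup V_1\cup\cdots\cup V_m\cup\{u\}$ where $V_i=\{\langle i,j\rangle: 0\le j\le n-1\}$, and edge set $E_0\cup E_1\cup\cdots\cup E_m\cup\{\langle m,j\rangle u: 0\le j\le n-1\}$, where $E_i=\{\langle i-1,j\rangle\langle i,k\rangle : \langle 0,j\rangle\langle 0,k\rangle\in E_0\}$ for $1\le i\le m$. *)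

theory Defs
  imports Main
begin

text \<open>Graphs are given by a vertex set and a symmetric edge relation (ordered pairs).\<close>

definition graph_hom :: "'a set \<Rightarrow> ('a \<times> 'a) set \<Rightarrow> 'b set \<Rightarrow> ('b \<times> 'b) set \<Rightarrow> ('a \<Rightarrow> 'b) \<Rightarrow> bool" where
  "graph_hom VG EG VH EH f \<longleftrightarrow>
     (\<forall>x\<in>VG. f x \<in> VH) \<and> (\<forall>x y. (x, y) \<in> EG \<longrightarrow> (f x, f y) \<in> EH)"

definition cycle_edges :: "nat \<Rightarrow> (nat \<times> nat) set" where
  "cycle_edges n = {(j, k). j < n \<and> k < n \<and> (k = (j + 1) mod n \<or> j = (k + 1) mod n)}"

text \<open>Vertices of the generalized Mycielskian: Lv i j stands for <i,j>, Apex for u.\<close>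
datatype myc_vertex = Lv nat nat | Apex

definition myc_verts :: "nat \<Rightarrow> nat \<Rightarrow> myc_vertex set" where
  "myc_verts m n = {Lv i j | i j. i \<le> m \<and> j < n} \<union> {Apex}"

definition myc_edges :: "nat \<Rightarrow> nat \<Rightarrow> (nat \<times> nat) set \<Rightarrow> (myc_vertex \<times> myc_vertex) set" where
  "myc_edges m n E =
     {(Lv 0 j, Lv 0 k) | j k. (j, k) \<in> E}
   \<union> {(Lv (i - 1) j, Lv i k) | i j k. 1 \<le> i \<and> i \<le> m \<and> (j, k) \<in> E}
   \<union> {(Lv i k, Lv (i - 1) j) | i j k. 1 \<le> i \<and> i \<le> m \<and> (j, k) \<in> E}
   \<union> {(Lv m j, Apex) | j. j < n}
   \<union> {(Apex, Lv m j) | j. j < n}"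

end

theory Submission
  imports Defs
begin

definition hc :: "nat \<Rightarrow> nat \<Rightarrow> nat" where
  "hc s j = (if j \<le> 2*s then j else if even (j - 2*s) then 2*s else 2*s - 1)"

definition gl :: "nat \<Rightarrow> nat \<Rightarrow> nat \<Rightarrow> nat" where
  "gl p m i = (if i \<le> p - m then 0 else i - (p - m))"

lemma hc_lt: "hc s j < 2*s+1" by (simp add: hc_def; linarith)

lemma hc_edge1:
  assumes "1 \<le> s" "s \<le> q" "j < 2*q+1" "k < 2*q+1" "k = (j+1) mod (2*q+1)"
  shows "(hc s j, hc s k) \<in> cycle_edges (2*s+1) \<and> (hc s k, hc s j) \<in> cycle_edges (2*s+1)"
proof (cases "j = 2*q")
  case True
  then have "k = 0" using assms by simp
  then show ?thesis using True assms by (auto simp: hc_def cycle_edges_def)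
next
  case False
  then have k: "k = j+1" using assms by simp
  show ?thesis
  proof (cases "j < 2*s")
    case True
    then show ?thesis using k assms by (auto simp: hc_def cycle_edges_def)
  next
    case False
    then have "(even (j - 2*s) \<and> odd (k - 2*s)) \<or> (odd (j - 2*s) \<and> even (k - 2*s))"
      using k by (simp add: Suc_diff_le)
    then show ?thesis using k assms False by (auto simp: hc_def cycle_edges_def)
  qed
qed

lemma hc_edge:
  assumes "1 \<le> s" "s \<le> q" "(j,k) \<in> cycle_edges (2*q+1)"
  shows "(hc s j, hc s k) \<in> cycle_edges (2*s+1)"
  using assms hc_edge1[of s q j k] hc_edge1[of s q k j] unfolding cycle_edges_def by auto

theorem lemma11:
  fixes p m q s :: nat
  assumes "1 \<le> m" and "m \<le> p" and "1 \<le> s" and "s \<le> q"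
  shows "\<exists>f. graph_hom
            (myc_verts p (2 * q + 1)) (myc_edges p (2 * q + 1) (cycle_edges (2 * q + 1)))
            (myc_verts m (2 * s + 1)) (myc_edges m (2 * s + 1) (cycle_edges (2 * s + 1))) f"
proof -
  define f where "f v = (case v of Lv i j \<Rightarrow> Lv (gl p m i) (hc s j) | Apex \<Rightarrow> Apex)" for v
  have V: "\<forall>x\<in>myc_verts p (2 * q + 1). f x \<in> myc_verts m (2 * s + 1)"
    using assms hc_lt by (auto simp: myc_verts_def f_def gl_def split: if_splits)
  have E: "(f x, f y) \<in> myc_edges m (2 * s + 1) (cycle_edges (2 * s + 1))"
    if "(x, y) \<in> myc_edges p (2 * q + 1) (cycle_edges (2 * q + 1))" for x y
  proof -
    have he: "\<And>j k. (j,k) \<in> cycle_edges (2*q+1) \<Longrightarrow> (hc s j, hc s k) \<in> cycle_edges (2*s+1)"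
      using hc_edge assms by blast
    have cross: "(Lv (gl p m (i-1)) a, Lv (gl p m i) b) \<in> myc_edges m (2 * s + 1) (cycle_edges (2 * s + 1))
       \<and> (Lv (gl p m i) b, Lv (gl p m (i-1)) a) \<in> myc_edges m (2 * s + 1) (cycle_edges (2 * s + 1))"
      if "1 \<le> i" "i \<le> p" "(a, b) \<in> cycle_edges (2*s+1)" for i a b
    proof (cases "i \<le> p - m")
      case True
      then have "gl p m i = 0" "gl p m (i-1) = 0" by (auto simp: gl_def)
      moreover have "(b, a) \<in> cycle_edges (2*s+1)" using that(3) by (auto simp: cycle_edges_def)
      ultimately show ?thesis using that unfolding myc_edges_def by blast
    next
      case False
      define i' where "i' = i - (p - m)"
      have "gl p m i = i'" "gl p m (i-1) = i' - 1" "1 \<le> i'" "i' \<le> m"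
        using False assms that by (auto simp: gl_def i'_def)
      then show ?thesis using that unfolding myc_edges_def by blast
    qed
    from that show ?thesis
      unfolding myc_edges_def[of p]
    proof (elim UnE CollectE exE conjE)
      fix j k assume "(x, y) = (Lv 0 j, Lv 0 k)" "(j, k) \<in> cycle_edges (2 * q + 1)"
      then show ?thesis using he unfolding myc_edges_def by (auto simp: f_def gl_def)
    next
      fix i j k assume "(x, y) = (Lv (i - 1) j, Lv i k)" "1 \<le> i" "i \<le> p" "(j, k) \<in> cycle_edges (2 * q + 1)"
      then show ?thesis using cross[of i "hc s j" "hc s k"] he by (auto simp: f_def)
    next
      fix i j k assume "(x, y) = (Lv i k, Lv (i - 1) j)" "1 \<le> i" "i \<le> p" "(j, k) \<in> cycle_edges (2 * q + 1)"
      then show ?thesis using cross[of i "hc s j" "hc s k"] he by (auto simp: f_def)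
    next
      fix j assume "(x, y) = (Lv p j, Apex)" "j < 2*q+1"
      moreover have "gl p m p = m" using assms by (auto simp: gl_def)
      ultimately show ?thesis using hc_lt[of s j] unfolding myc_edges_def by (auto simp: f_def)
    next
      fix j assume "(x, y) = (Apex, Lv p j)" "j < 2*q+1"
      moreover have "gl p m p = m" using assms by (auto simp: gl_def)
      ultimately show ?thesis using hc_lt[of s j] unfolding myc_edges_def by (auto simp: f_def)
    qed
  qed
  show ?thesis unfolding graph_hom_def using V E by blast
qed

end
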